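(* Let $G=(V,E)$ be an undirected graph (finite or infinite), $X$ a ``strong'' partitive set of $G$, and $M=M(S)$ a multiplex of $G$ generated by a simplex $S=(V_S,E_S)$. If $M\cap E(X)\neq\emptyset$, then $M\subseteq E(X)$.
   Context: A graph $G=(V,E)$ has vertex set $V$ and edge set $E\subseteq V^2$; it is undirected if $E$ is irreflexive and symmetric. For $X\subseteq V$, $E(X)=\{(a,b)\in E:a,b\in X\}$. A set $X\subseteq V$ is a partitive set of $G$ if for all $a,b\in X$ and $c\in V\setminus X$: $(a,c)\in E\Leftrightarrow(b,c)\in E$ and $(c,a)\in E\Leftrightarrow(c,b)\in E$; $I(G)$ is the class of partitive sets. A ``strong'' partitive set is an $X\in I(G)$ such that for every $Y\in I(G)$ with $X\cap Y\neq\emptyset$, $X\subseteq Y$ or $Y\subseteq X$. Implication classes: on $E$ define $(a,b)\Gamma(a',b')$ iff either $a=a'$ and $(b,b')\notin E$, or $b=b'$ and $(a,a')\notin E$; the classes of the transitive closure $\Gamma^*$ are the implication classes. For an implication class $A$, $A^{-1}=\{(b,a):(a,b)\in A\}$ and the color class is $\widehat A=A\cup A^{-1}$. A simplex of rank $r\ge1$ is a complete sub-graph $S=(V_S,E_S)$ of $G$ on $r+1$ vertices whose distinct undirected edges lie in distinct color classes. The multiplex generated by $S$ is $M(S)=\bigcup\{\widehat A:\widehat A\text{ a color class},\ \widehat A\cap E_S\neq\emptyset\}$. *)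

theory Defs
  imports Main
begin

definition is_graph :: "'a set \<Rightarrow> ('a \<times> 'a) set \<Rightarrow> bool" where
  "is_graph V E \<longleftrightarrow> E \<subseteq> V \<times> V"

definition undirected_graph :: "'a set \<Rightarrow> ('a \<times> 'a) set \<Rightarrow> bool" where
  "undirected_graph V E \<longleftrightarrow> is_graph V E \<and> irrefl E \<and> sym E"

definition edges_in :: "('a \<times> 'a) set \<Rightarrow> 'a set \<Rightarrow> ('a \<times> 'a) set" where
  "edges_in E X = {(a, b) \<in> E. a \<in> X \<and> b \<in> X}"

definition partitive :: "'a set \<Rightarrow> ('a \<times> 'a) set \<Rightarrow> 'a set \<Rightarrow> bool" where
  "partitive V E X \<longleftrightarrow> X \<subseteq> V \<and>
     (\<forall>a\<in>X. \<forall>b\<in>X. \<forall>c\<in>V - X.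
        ((a, c) \<in> E \<longleftrightarrow> (b, c) \<in> E) \<and> ((c, a) \<in> E \<longleftrightarrow> (c, b) \<in> E))"

definition strong_partitive :: "'a set \<Rightarrow> ('a \<times> 'a) set \<Rightarrow> 'a set \<Rightarrow> bool" where
  "strong_partitive V E X \<longleftrightarrow> partitive V E X \<and>
     (\<forall>Y. partitive V E Y \<and> X \<inter> Y \<noteq> {} \<longrightarrow> X \<subseteq> Y \<or> Y \<subseteq> X)"

definition Gamma :: "('a \<times> 'a) set \<Rightarrow> (('a \<times> 'a) \<times> ('a \<times> 'a)) set" where
  "Gamma E = {((a, b), (a', b')). (a, b) \<in> E \<and> (a', b') \<in> E \<and>
      ((a = a' \<and> (b, b') \<notin> E) \<or> (b = b' \<and> (a, a') \<notin> E))}"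

text \<open>Implication classes: classes of the transitive closure of Gamma (which is
  reflexive on E, since E is irreflexive).\<close>
definition implication_classes :: "('a \<times> 'a) set \<Rightarrow> ('a \<times> 'a) set set" where
  "implication_classes E = {(Gamma E)\<^sup>+ `` {e} | e. e \<in> E}"

definition color_classes :: "('a \<times> 'a) set \<Rightarrow> ('a \<times> 'a) set set" where
  "color_classes E = {A \<union> A\<inverse> | A. A \<in> implication_classes E}"

definition simplex :: "'a set \<Rightarrow> ('a \<times> 'a) set \<Rightarrow> 'a set \<Rightarrow> ('a \<times> 'a) set \<Rightarrow> nat \<Rightarrow> bool" where
  "simplex V E VS ES r \<longleftrightarrow> r \<ge> 1 \<and> finite VS \<and> card VS = r + 1 \<and> VS \<subseteq> V \<and>
     ES = {(a, b). a \<in> VS \<and> b \<in> VS \<and> a \<noteq> b} \<and> ES \<subseteq> E \<and>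
     (\<forall>a b c d. (a, b) \<in> ES \<and> (c, d) \<in> ES \<and> {a, b} \<noteq> {c, d} \<longrightarrow>
        \<not> (\<exists>C \<in> color_classes E. (a, b) \<in> C \<and> (c, d) \<in> C))"

definition multiplex :: "('a \<times> 'a) set \<Rightarrow> ('a \<times> 'a) set \<Rightarrow> ('a \<times> 'a) set" where
  "multiplex E ES = \<Union> {C \<in> color_classes E. C \<inter> ES \<noteq> {}}"

end

theory Submission
  imports Defs
begin

lemma Gamma_E: "(x,y) \<in> Gamma E \<Longrightarrow> x \<in> E \<and> y \<in> E"
  unfolding Gamma_def by auto

lemma Gamma_sym: "sym E \<Longrightarrow> (x,y) \<in> Gamma E \<Longrightarrow> (y,x) \<in> Gamma E"
  unfolding Gamma_def sym_def by auto

lemma Gamma_swap: "sym E \<Longrightarrow> ((a,b),(c,d)) \<in> Gamma E \<Longrightarrow> ((b,a),(d,c)) \<in> Gamma E"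
  unfolding Gamma_def sym_def by auto

lemma Gamma_refl: "irrefl E \<Longrightarrow> x \<in> E \<Longrightarrow> (x,x) \<in> Gamma E"
  unfolding Gamma_def irrefl_def by auto

lemma rtr_sym: assumes "sym E" "(x,y) \<in> (Gamma E)\<^sup>*" shows "(y,x) \<in> (Gamma E)\<^sup>*"
  using assms(2)
proof (induction rule: rtrancl_induct)
  case base then show ?case by simp
next
  case (step y z)
  then show ?case using assms Gamma_sym[of E y z] by (meson converse_rtrancl_into_rtrancl)
qed

lemma rtr_swap: assumes "sym E" "((a,b),(c,d)) \<in> (Gamma E)\<^sup>*" shows "((b,a),(d,c)) \<in> (Gamma E)\<^sup>*"
  using assms(2)
proof (induction "(c,d)" arbitrary: c d rule: rtrancl_induct)
  case base then show ?case by simp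
next
  case (step y)
  obtain p q where y: "y = (p,q)" by fastforce
  have "((b,a),(q,p)) \<in> (Gamma E)\<^sup>*" using step y by simp
  moreover have "((q,p),(d,c)) \<in> Gamma E" using assms step y Gamma_swap[of E p q c d] by simp
  ultimately show ?case by (rule rtrancl_into_rtrancl)
qed

lemma rtr_E: assumes "x \<in> E" "(x,y) \<in> (Gamma E)\<^sup>*" shows "y \<in> E"
  using assms(2,1) by (induction rule: rtrancl_induct) (auto dest: Gamma_E)

lemma rtr_trancl: "irrefl E \<Longrightarrow> x \<in> E \<Longrightarrow> (x,y) \<in> (Gamma E)\<^sup>* \<Longrightarrow> (x,y) \<in> (Gamma E)\<^sup>+"
  by (metis Gamma_refl r_into_trancl' rtrancl_eq_or_trancl)

lemma color_mem:
  assumes "C \<in> color_classes E"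
  shows "\<exists>e\<in>E. \<forall>a b. (a,b) \<in> C \<longleftrightarrow> ((e,(a,b)) \<in> (Gamma E)\<^sup>+ \<or> (e,(b,a)) \<in> (Gamma E)\<^sup>+)"
  using assms unfolding color_classes_def implication_classes_def by auto

lemma closure_step:
  assumes "E \<subseteq> V \<times> V" "sym E" "partitive V E X"
    and "((p,q),(p',q')) \<in> Gamma E" "p \<in> X" "q \<in> X"
  shows "p' \<in> X \<and> q' \<in> X"
  using assms unfolding Gamma_def partitive_def sym_def by blast

lemma closure:
  assumes "E \<subseteq> V \<times> V" "sym E" "partitive V E X"
    and "((p,q),(p',q')) \<in> (Gamma E)\<^sup>*" "p \<in> X" "q \<in> X"
  shows "p' \<in> X \<and> q' \<in> X"
  using assms(4)
proof (induction "(p',q')" arbitrary: p' q' rule: rtrancl_induct)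
  case base then show ?case using assms by simp
next
  case (step y)
  obtain a b where y: "y = (a,b)" by fastforce
  then show ?case using step closure_step[OF assms(1-3), of a b p' q'] by auto
qed


lemma edge_lemma:
  assumes "sym E"
    and Y: "Y = {z. \<exists>z'. ((u,w),(z,z')) \<in> (Gamma E)\<^sup>* \<or> ((u,w),(z',z)) \<in> (Gamma E)\<^sup>*}"
    and "(u,w) \<in> E" and r: "((u,w),(p,q)) \<in> (Gamma E)\<^sup>*" and "c \<notin> Y"
  shows "(p,c) \<in> E \<longleftrightarrow> (q,c) \<in> E"
proof -
  have pq: "(p,q) \<in> E" using rtr_E[OF assms(3) r] .
  show ?thesis
  proof (rule ccontr)
    assume "\<not> ?thesis"
    then consider "(p,c) \<in> E" "(q,c) \<notin> E" | "(q,c) \<in> E" "(p,c) \<notin> E" by blast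
    then show False
    proof cases
      case 1
      then have "((p,q),(p,c)) \<in> Gamma E" using pq unfolding Gamma_def by auto
      then have "((u,w),(p,c)) \<in> (Gamma E)\<^sup>*" by (rule rtrancl_into_rtrancl[OF r])
      then have "c \<in> Y" using Y by blast
      then show False using assms by blast
    next
      case 2
      then have "(c,q) \<in> E" using assms(1) unfolding sym_def by blast
      then have "((p,q),(c,q)) \<in> Gamma E" using pq 2 unfolding Gamma_def by auto
      then have "((u,w),(c,q)) \<in> (Gamma E)\<^sup>*" by (rule rtrancl_into_rtrancl[OF r])
      then have "c \<in> Y" using Y by blast
      then show False using assms by blast
    qed
  qed
qed

lemma inv_lemma:
  assumes "sym E"
    and Y: "Y = {z. \<exists>z'. ((u,w),(z,z')) \<in> (Gamma E)\<^sup>* \<or> ((u,w),(z',z)) \<in> (Gamma E)\<^sup>*}"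
    and "(u,w) \<in> E" and r: "((u,w),(p,q)) \<in> (Gamma E)\<^sup>*" and "c \<notin> Y"
  shows "((p,c) \<in> E \<longleftrightarrow> (u,c) \<in> E) \<and> ((q,c) \<in> E \<longleftrightarrow> (u,c) \<in> E)"
  using r
proof (induction "(p,q)" arbitrary: p q rule: rtrancl_induct)
  case base
  then show ?case using edge_lemma[OF assms(1,2,3) _ assms(5), of u w] by simp
next
  case (step y)
  obtain a b where y: "y = (a,b)" by fastforce
  have e: "(p,c) \<in> E \<longleftrightarrow> (q,c) \<in> E"
    using edge_lemma[OF assms(1,2,3) _ assms(5), of p q] step by (meson rtrancl_into_rtrancl)
  have ih: "((a,c) \<in> E \<longleftrightarrow> (u,c) \<in> E) \<and> ((b,c) \<in> E \<longleftrightarrow> (u,c) \<in> E)" using step y by simp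
  have "a = p \<or> b = q" using step(2) y unfolding Gamma_def by auto
  then show ?case using e ih by blast
qed

lemma module_lemma:
  assumes "sym E" "E \<subseteq> V \<times> V"
    and Y: "Y = {z. \<exists>z'. ((u,w),(z,z')) \<in> (Gamma E)\<^sup>* \<or> ((u,w),(z',z)) \<in> (Gamma E)\<^sup>*}"
    and "(u,w) \<in> E"
  shows "partitive V E Y"
proof -
  have YV: "Y \<subseteq> V"
  proof
    fix z assume "z \<in> Y"
    then obtain z' where "((u,w),(z,z')) \<in> (Gamma E)\<^sup>* \<or> ((u,w),(z',z)) \<in> (Gamma E)\<^sup>*" using Y by blast
    then have "(z,z') \<in> E \<or> (z',z) \<in> E" using rtr_E assms(4) by blast
    then show "z \<in> V" using assms(2) by blast
  qed
  have key: "(z,c) \<in> E \<longleftrightarrow> (u,c) \<in> E" if zc: "z \<in> Y" "c \<notin> Y" for z c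
  proof -
    obtain z' where "((u,w),(z,z')) \<in> (Gamma E)\<^sup>* \<or> ((u,w),(z',z)) \<in> (Gamma E)\<^sup>*" using Y zc by blast
    then show ?thesis using inv_lemma[OF assms(1,3,4) _ zc(2)] by blast
  qed
  have symE: "(x,y) \<in> E \<longleftrightarrow> (y,x) \<in> E" for x y using assms(1) unfolding sym_def by blast
  show ?thesis unfolding partitive_def using YV key symE by blast
qed

lemma triangle_lemma:
  assumes "sym E"
    and vu: "(v,u) \<in> E" and vw: "(v,w) \<in> E" and uw: "(u,w) \<in> E"
    and n1: "((u,w),(u,v)) \<notin> (Gamma E)\<^sup>*" and n2: "((u,w),(v,w)) \<notin> (Gamma E)\<^sup>*"
    and r: "((u,w),(b,c)) \<in> (Gamma E)\<^sup>*"
  shows "((v,u),(v,b)) \<in> (Gamma E)\<^sup>* \<and> ((v,w),(v,c)) \<in> (Gamma E)\<^sup>*"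
  using r
proof (induction "(b,c)" arbitrary: b c rule: rtrancl_induct)
  case base
  then show ?case by simp
next
  case (step y)
  obtain b' c' where y: "y = (b',c')" by fastforce
  have symE: "(x,y) \<in> E \<longleftrightarrow> (y,x) \<in> E" for x y using assms(1) unfolding sym_def by blast
  have ih1: "((v,u),(v,b')) \<in> (Gamma E)\<^sup>*" and ih2: "((v,w),(v,c')) \<in> (Gamma E)\<^sup>*" using step y by simp_all
  have vb': "(v,b') \<in> E" using rtr_E[OF vu ih1] .
  have vc': "(v,c') \<in> E" using rtr_E[OF vw ih2] .
  have st: "((b',c'),(b,c)) \<in> Gamma E" using step y by simp
  have bc: "(b,c) \<in> E" using Gamma_E[OF st] by simp
  have rb: "((u,w),(b',c')) \<in> (Gamma E)\<^sup>*" using step y by simp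
  have rbc: "((u,w),(b,c)) \<in> (Gamma E)\<^sup>*" using step by simp
  consider "b = b'" "(c',c) \<notin> E" | "c = c'" "(b',b) \<notin> E" using st unfolding Gamma_def by auto
  then show ?case
  proof cases
    case 1
    have "(v,c) \<in> E"
    proof (rule ccontr)
      assume nv: "(v,c) \<notin> E"
      have "((b,c),(b,v)) \<in> Gamma E" using bc vb' nv 1 symE unfolding Gamma_def by auto
      then have a: "((u,w),(b,v)) \<in> (Gamma E)\<^sup>*" by (rule rtrancl_into_rtrancl[OF rbc])
      have "((u,v),(b',v)) \<in> (Gamma E)\<^sup>*" using rtr_swap[OF assms(1) ih1] .
      then have "((b,v),(u,v)) \<in> (Gamma E)\<^sup>*" using rtr_sym[OF assms(1)] 1 by blast
      then show False using a n1 by (meson rtrancl_trans)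
    qed
    then have "((v,c'),(v,c)) \<in> Gamma E" using vc' 1 unfolding Gamma_def by auto
    then show ?thesis using ih1 ih2 1 by (meson rtrancl_into_rtrancl)
  next
    case 2
    have "(v,b) \<in> E"
    proof (rule ccontr)
      assume nv: "(v,b) \<notin> E"
      have "((b,c),(v,c)) \<in> Gamma E" using bc vc' nv 2 symE unfolding Gamma_def by auto
      then have a: "((u,w),(v,c)) \<in> (Gamma E)\<^sup>*" by (rule rtrancl_into_rtrancl[OF rbc])
      have "((v,c),(v,w)) \<in> (Gamma E)\<^sup>*" using rtr_sym[OF assms(1) ih2] 2 by simp
      then show False using a n2 by (meson rtrancl_trans)
    qed
    then have "((v,b'),(v,b)) \<in> Gamma E" using vb' 2 unfolding Gamma_def by auto
    then show ?thesis using ih1 ih2 2 by (meson rtrancl_into_rtrancl)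
  qed
qed


lemma class_closure:
  assumes "E \<subseteq> V \<times> V" "sym E" "partitive V E X"
    and C: "C \<in> color_classes E" and ab: "(a,b) \<in> C" and cd: "(c,d) \<in> C"
    and "a \<in> X" "b \<in> X"
  shows "c \<in> X \<and> d \<in> X \<and> (c,d) \<in> E"
proof -
  obtain e where e: "e \<in> E" and mem: "\<And>a b. (a,b) \<in> C \<longleftrightarrow> ((e,(a,b)) \<in> (Gamma E)\<^sup>+ \<or> (e,(b,a)) \<in> (Gamma E)\<^sup>+)"
    using color_mem[OF C] by blast
  have 1: "(e,(a,b)) \<in> (Gamma E)\<^sup>* \<or> (e,(b,a)) \<in> (Gamma E)\<^sup>*" using mem ab by (meson trancl_into_rtrancl)
  have 2: "(e,(c,d)) \<in> (Gamma E)\<^sup>* \<or> (e,(d,c)) \<in> (Gamma E)\<^sup>*" using mem cd by (meson trancl_into_rtrancl)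
  have "(((a,b),e) \<in> (Gamma E)\<^sup>*) \<or> (((b,a),e) \<in> (Gamma E)\<^sup>*)" using 1 rtr_sym[OF assms(2)] by blast
  then have "((a,b),(c,d)) \<in> (Gamma E)\<^sup>* \<or> ((a,b),(d,c)) \<in> (Gamma E)\<^sup>* \<or>
             ((b,a),(c,d)) \<in> (Gamma E)\<^sup>* \<or> ((b,a),(d,c)) \<in> (Gamma E)\<^sup>*"
    using 2 by (meson rtrancl_trans)
  then have X: "c \<in> X \<and> d \<in> X" using closure[OF assms(1-3)] assms(7,8) by blast
  have "(c,d) \<in> E \<or> (d,c) \<in> E" using 2 rtr_E e by blast
  then have "(c,d) \<in> E" using assms(2) unfolding sym_def by blast
  then show ?thesis using X by blast
qed

lemma simplex_unrel:
  assumes "irrefl E" "simplex V E VS ES r"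
    and "(a,b) \<in> ES" "(c,d) \<in> ES" "{a,b} \<noteq> {c,d}"
  shows "((a,b),(c,d)) \<notin> (Gamma E)\<^sup>*"
proof
  assume rel: "((a,b),(c,d)) \<in> (Gamma E)\<^sup>*"
  have abE: "(a,b) \<in> E" using assms(2,3) unfolding simplex_def by blast
  define C where "C = (Gamma E)\<^sup>+ `` {(a,b)} \<union> ((Gamma E)\<^sup>+ `` {(a,b)})\<inverse>"
  have "C \<in> color_classes E" unfolding C_def color_classes_def implication_classes_def using abE by blast
  moreover have "(a,b) \<in> C" unfolding C_def using Gamma_refl[OF assms(1) abE] by blast
  moreover have "(c,d) \<in> C" unfolding C_def using rtr_trancl[OF assms(1) abE rel] by blast
  ultimately show False using assms(2-5) unfolding simplex_def by blast
qed

theorem theorem3p7: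
  fixes V :: "'a set" and E :: "('a \<times> 'a) set" and X VS :: "'a set"
    and ES :: "('a \<times> 'a) set" and r :: nat
  assumes "undirected_graph V E"
    and "strong_partitive V E X"
    and "simplex V E VS ES r"
    and "multiplex E ES \<inter> edges_in E X \<noteq> {}"
  shows "multiplex E ES \<subseteq> edges_in E X"
proof -
  have EV: "E \<subseteq> V \<times> V" and irr: "irrefl E" and sy: "sym E"
    using assms(1) unfolding undirected_graph_def is_graph_def by auto
  have part: "partitive V E X" using assms(2) unfolding strong_partitive_def by blast
  have strong: "\<And>Y. partitive V E Y \<Longrightarrow> X \<inter> Y \<noteq> {} \<Longrightarrow> X \<subseteq> Y \<or> Y \<subseteq> X"
    using assms(2) unfolding strong_partitive_def by blast
  have ESd: "ES = {(a, b). a \<in> VS \<and> b \<in> VS \<and> a \<noteq> b}" and ESE: "ES \<subseteq> E"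
    using assms(3) unfolding simplex_def by auto
  obtain p q where pq: "(p,q) \<in> multiplex E ES" "(p,q) \<in> edges_in E X" using assms(4) by auto
  obtain C where C: "C \<in> color_classes E" "(p,q) \<in> C" "C \<inter> ES \<noteq> {}"
    using pq(1) unfolding multiplex_def by blast
  obtain u v where uv: "(u,v) \<in> C" "(u,v) \<in> ES" using C(3) by auto
  have pqX: "p \<in> X" "q \<in> X" using pq(2) unfolding edges_in_def by auto
  have uvX: "u \<in> X" "v \<in> X" using class_closure[OF EV sy part C(1,2) uv(1) pqX] by auto
  have uvS: "u \<in> VS" "v \<in> VS" "u \<noteq> v" using uv(2) ESd by auto
  have VSX: "VS \<subseteq> X"
  proof
    fix w assume wS: "w \<in> VS"
    show "w \<in> X"
    proof (rule ccontr)
      assume wX: "w \<notin> X"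
      have wu: "w \<noteq> u" "w \<noteq> v" using wX uvX by auto
      have uwE: "(u,w) \<in> E" "(v,u) \<in> E" "(v,w) \<in> E" using ESd ESE wS uvS wu by auto
      define Y where "Y = {z. \<exists>z'. ((u,w),(z,z')) \<in> (Gamma E)\<^sup>* \<or> ((u,w),(z',z)) \<in> (Gamma E)\<^sup>*}"
      have pY: "partitive V E Y" using module_lemma[OF sy EV Y_def uwE(1)] .
      have "u \<in> Y" "w \<in> Y" unfolding Y_def by blast+
      then have "X \<subseteq> Y" using strong[OF pY] uvX wX by blast
      then obtain z' where z': "((u,w),(v,z')) \<in> (Gamma E)\<^sup>* \<or> ((u,w),(z',v)) \<in> (Gamma E)\<^sup>*"
        using uvX unfolding Y_def by blast
      have n1: "((u,w),(u,v)) \<notin> (Gamma E)\<^sup>*"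
        using simplex_unrel[OF irr assms(3), of u w u v] ESd wS uvS wu by (auto simp: doubleton_eq_iff)
      have n2: "((u,w),(v,w)) \<notin> (Gamma E)\<^sup>*"
        using simplex_unrel[OF irr assms(3), of u w v w] ESd wS uvS wu by (auto simp: doubleton_eq_iff)
      have "((v,u),(v,v)) \<in> (Gamma E)\<^sup>* \<or> ((v,w),(v,v)) \<in> (Gamma E)\<^sup>*"
        using z' triangle_lemma[OF sy uwE(2,3,1) n1 n2] by blast
      then have "(v,v) \<in> E" using rtr_E uwE by blast
      then show False using irr unfolding irrefl_def by blast
    qed
  qed
  show ?thesis
  proof
    fix x assume "x \<in> multiplex E ES"
    then obtain D where D: "D \<in> color_classes E" "x \<in> D" "D \<inter> ES \<noteq> {}"
      unfolding multiplex_def by blast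
    obtain a b where ab: "(a,b) \<in> D" "(a,b) \<in> ES" using D(3) by auto
    have abX: "a \<in> X" "b \<in> X" using ab(2) ESd VSX by auto
    obtain c d where x: "x = (c,d)" by fastforce
    have "c \<in> X \<and> d \<in> X \<and> (c,d) \<in> E" using class_closure[OF EV sy part D(1) ab(1) _ abX] D(2) x by blast
    then show "x \<in> edges_in E X" unfolding edges_in_def x by blast
  qed
qed

end
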